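(* Let $n,k\ge1$ and let $\bar x,\bar y\in\mathbb{Z}/2^{n+k-1}\mathbb{Z}$. There is an arrow (of either colour) from $\overline{H}_{M_k}(\bar x)$ to $\overline{H}_{M_k}(\bar y)$ in $\Gamma_{2^n}$ if and only if there exist $\bar a\in[\bar x]$ and $\bar b\in[\bar y]$ with an arrow $\bar a\to\bar b$ in $\Gamma_{2^{n+k-1}}$. Moreover, in that case the arrows of $\Gamma_{2^{n+k-1}}$ from elements of $[\bar x]$ to elements of $[\bar y]$ define a bijection $[\bar x]\to[\bar y]$ (each element of $[\bar x]$ has exactly one such outgoing arrow and each element of $[\bar y]$ exactly one such incoming arrow).
   Context: $T(x)=x/2$ for $x$ even, $T(x)=(3x+1)/2$ for $x$ odd, extended to $\mathbb{Z}_2$; $T_0(x)=x/2$, $T_1(x)=(3x+1)/2$. $\Gamma_d$ is the directed graph on $\mathbb{Z}/d\mathbb{Z}$ with a black arrow $r\to s$ iff there exist positive integers $x\equiv r$, $y\equiv s\pmod d$ with $x$ even and $T_0(x)=y$, and a red arrow $r\to s$ iff there exist such $x,y$ with $x$ odd and $T_1(x)=y$. The parity vector map $\Phi^{-1}:\mathbb{Z}_2\to\mathbb{Z}_2$ is $\Phi^{-1}(x)=\sum_{i\ge0}(T^i(x)\bmod 2)2^i$; it is a bijection with inverse $\Phi$. For $k\ge1$, $M_k(\sum_i a_i2^i)=\sum_i m_i2^i$ with $m_i\equiv a_i+\cdots+a_{i+k-1}\pmod2$, and $H_{M_k}=\Phi\circ M_k\circ\Phi^{-1}$, which commutes with $T$.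 The residue of $H_{M_k}(x)$ mod $2^n$ depends only on $x$ mod $2^{n+k-1}$; $\overline{H}_{M_k}:\mathbb{Z}/2^{n+k-1}\mathbb{Z}\to\mathbb{Z}/2^n\mathbb{Z}$ is the induced map, and $[\bar x]=\overline{H}_{M_k}^{-1}(\{\overline{H}_{M_k}(\bar x)\})$. *)

theory Defs
  imports Main
begin

text \<open>2-adic integers are represented by their binary digit sequences:
  x = sum_i (if x i then 2^i else 0).\<close>
type_synonym z2 = "nat \<Rightarrow> bool"

definition trunc2 :: "nat \<Rightarrow> z2 \<Rightarrow> nat" where
  "trunc2 n x = (\<Sum>i<n. if x i then 2^i else 0)"

definition lift2 :: "nat \<Rightarrow> nat \<Rightarrow> z2" where
  "lift2 m r = (\<lambda>i. i < m \<and> odd (r div 2^i))"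

definition Tnat :: "nat \<Rightarrow> nat" where
  "Tnat x = (if even x then x div 2 else (3 * x + 1) div 2)"

text \<open>Collatz map on Z_2: digit i of T(x) is digit i of T(x mod 2^(i+2)),
  since T(x) mod 2^(i+1) depends only on x mod 2^(i+2).\<close>
definition T2 :: "z2 \<Rightarrow> z2" where
  "T2 x = (\<lambda>i. odd (Tnat (trunc2 (i + 2) x) div 2^i))"

definition PhiInv :: "z2 \<Rightarrow> z2" where
  "PhiInv x = (\<lambda>i. (T2 ^^ i) x 0)"

definition Phi :: "z2 \<Rightarrow> z2" where
  "Phi = inv PhiInv"

definition Mk :: "nat \<Rightarrow> z2 \<Rightarrow> z2" where
  "Mk k a = (\<lambda>i. odd (card {j. i \<le> j \<and> j < i + k \<and> a j}))"

definition HM :: "nat \<Rightarrow> z2 \<Rightarrow> z2" where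
  "HM k = Phi \<circ> Mk k \<circ> PhiInv"

text \<open>induced map Z/2^(n+k-1) -> Z/2^n (residues represented in {0..<2^m})\<close>
definition HMbar :: "nat \<Rightarrow> nat \<Rightarrow> nat \<Rightarrow> nat" where
  "HMbar k n r = trunc2 n (HM k (lift2 (n + k - 1) r))"

definition HMclass :: "nat \<Rightarrow> nat \<Rightarrow> nat \<Rightarrow> nat set" where
  "HMclass k n r = {a \<in> {0..<2^(n + k - 1)}. HMbar k n a = HMbar k n r}"

definition black_arrow :: "nat \<Rightarrow> nat \<Rightarrow> nat \<Rightarrow> bool" where
  "black_arrow d r s = (\<exists>x y :: nat. 0 < x \<and> 0 < y \<and> x mod d = r \<and> y mod d = s
      \<and> even x \<and> y = x div 2)"

definition red_arrow :: "nat \<Rightarrow> nat \<Rightarrow> nat \<Rightarrow> bool" where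
  "red_arrow d r s = (\<exists>x y :: nat. 0 < x \<and> 0 < y \<and> x mod d = r \<and> y mod d = s
      \<and> odd x \<and> y = (3 * x + 1) div 2)"

definition arrow :: "nat \<Rightarrow> nat \<Rightarrow> nat \<Rightarrow> bool" where
  "arrow d r s = (black_arrow d r s \<or> red_arrow d r s)"

end

theory Submission
  imports Defs
begin

definition agree :: "nat \<Rightarrow> z2 \<Rightarrow> z2 \<Rightarrow> bool" where
  "agree N z w = (\<forall>i<N. z i = w i)"

definition dig :: "nat \<Rightarrow> z2" where "dig c = (\<lambda>i. odd (c div 2^i))"

lemma trunc2_Suc: "trunc2 (Suc N) z = trunc2 N z + (if z N then 2^N else 0)"
  by (simp add: trunc2_def)

lemma trunc2_less: "trunc2 N z < 2^N"
proof (induction N)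
  case 0 then show ?case by (simp add: trunc2_def)
next
  case (Suc N) then show ?case by (simp add: trunc2_Suc)
qed

lemma dig_mod: "dig A i = dig (A mod 2^(Suc i)) i"
proof -
  have "A mod (2^i * 2) = 2^i * (A div 2^i mod 2) + A mod 2^i" by (rule mod_mult2_eq)
  then have "(A mod 2^(Suc i)) div 2^i = A div 2^i mod 2"
    by (simp add: mult.commute)
  then show ?thesis unfolding dig_def by simp
qed

lemma trunc2_dig: "trunc2 N (dig c) = c mod 2^N"
proof (induction N)
  case 0 then show ?case by (simp add: trunc2_def)
next
  case (Suc N)
  have "c mod (2^N * 2) = 2^N * (c div 2^N mod 2) + c mod 2^N" by (rule mod_mult2_eq)
  then have "c mod 2^Suc N = c mod 2^N + (if dig c N then 2^N else 0)"
    by (auto simp: dig_def mult.commute odd_iff_mod_2_eq_one even_iff_mod_2_eq_zero)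
  then show ?case using Suc by (simp add: trunc2_Suc)
qed

lemma dig_trunc2: "dig (trunc2 N z) i = (i < N \<and> z i)"
proof (induction N)
  case 0 then show ?case by (simp add: trunc2_def dig_def)
next
  case (Suc N)
  show ?case
  proof (cases "i < N")
    case True
    have "dig (trunc2 (Suc N) z) i = dig (trunc2 (Suc N) z mod 2^(Suc i)) i" by (rule dig_mod)
    also have "trunc2 (Suc N) z mod 2^(Suc i) = trunc2 N z mod 2^(Suc i)"
    proof -
      have "(2::nat)^(Suc i) dvd 2^N" by (rule le_imp_power_dvd) (use True in simp)
      then have "(trunc2 N z + (if z N then 2^N else 0)) mod 2^(Suc i) = trunc2 N z mod 2^(Suc i)"
        by (cases "z N") (auto elim!: dvdE)
      then show ?thesis by (simp add: trunc2_Suc)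
    qed
    also have "dig (trunc2 N z mod 2^(Suc i)) i = dig (trunc2 N z) i" by (rule dig_mod[symmetric])
    finally show ?thesis using Suc True by simp
  next
    case False
    show ?thesis
    proof (cases "i = N")
      case True
      have "trunc2 (Suc N) z div 2^N = (if z N then 1 else 0)"
        
      proof (cases "z N")
        case True
        have "(trunc2 N z + 2^N) div 2^N = trunc2 N z div 2^N + 1"
          by (rule div_add_self2) simp
        then show ?thesis using True trunc2_less[of N z] by (simp add: trunc2_Suc)
      next
        case False
        then show ?thesis using trunc2_less[of N z] by (simp add: trunc2_Suc)
      qed
      then show ?thesis using True by (simp add: dig_def)
    next
      case F: False
      then have "i > N" using False by simp
      then have "trunc2 (Suc N) z < 2^i"
        
      proof -
        have "(2::nat)^Suc N \<le> 2^i" by (rule power_increasing) (use \<open>i > N\<close> in auto)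
        then show ?thesis using trunc2_less[of "Suc N" z] by linarith
      qed
      then show ?thesis using \<open>i > N\<close> by (simp add: dig_def)
    qed
  qed
qed

lemma agree_trunc2: "agree N z w \<longleftrightarrow> trunc2 N z = trunc2 N w"
proof
  assume "agree N z w" then show "trunc2 N z = trunc2 N w"
    unfolding agree_def trunc2_def by (intro sum.cong) auto
next
  assume h: "trunc2 N z = trunc2 N w"
  show "agree N z w" unfolding agree_def
  proof (intro allI impI)
    fix i assume "i < N"
    then show "z i = w i" using dig_trunc2[of N z i] dig_trunc2[of N w i] h by simp
  qed
qed

lemma agree_dig_trunc2: "agree N (dig (trunc2 N z)) z"
  by (simp add: agree_def dig_trunc2)

lemma trunc2_trunc2: "j \<le> N \<Longrightarrow> trunc2 N z mod 2^j = trunc2 j z"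
proof -
  assume "j \<le> N"
  have "agree j (dig (trunc2 N z)) z" using \<open>j \<le> N\<close> by (simp add: agree_def dig_trunc2)
  then have "trunc2 j (dig (trunc2 N z)) = trunc2 j z" by (simp add: agree_trunc2)
  then show ?thesis by (simp add: trunc2_dig)
qed

lemma agree_mono: "agree N z w \<Longrightarrow> j \<le> N \<Longrightarrow> agree j z w"
  by (simp add: agree_def)

lemma agree_Suc: "agree (Suc N) z w \<longleftrightarrow> agree N z w \<and> z N = w N"
  by (auto simp: agree_def less_Suc_eq)

lemma agree_Suc0: "agree (Suc N) z w \<longleftrightarrow> z 0 = w 0 \<and> agree N (\<lambda>i. z (Suc i)) (\<lambda>i. w (Suc i))"
  by (auto simp: agree_def less_Suc_eq_0_disj)

lemma Tnat_mod: "Tnat u mod 2^j = Tnat (u mod 2^(Suc j)) mod 2^j"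
proof -
  define r where "r = u mod 2^(Suc j)"
  define q where "q = u div 2^(Suc j)"
  have u: "u = r + 2 * (2^j * q)" unfolding r_def q_def
    using mod_mult_div_eq[of u "2^Suc j"] by (simp add: mult.assoc)
  have par: "even u \<longleftrightarrow> even r" using u by simp
  show ?thesis
  proof (cases "even r")
    case True
    then have "Tnat u = r div 2 + 2^j * q" using par u by (auto simp: Tnat_def)
    moreover have "Tnat r = r div 2" using True by (simp add: Tnat_def)
    ultimately show ?thesis by (simp only: r_def[symmetric]) simp
  next
    case False
    have "3 * u + 1 = (3 * r + 1) + 2 * (3 * 2^j * q)" using u by simp
    then have "(3 * u + 1) div 2 = (3 * r + 1) div 2 + 3 * 2^j * q" by simp
    then have "Tnat u = (3 * r + 1) div 2 + 2^j * (3 * q)" using par False by (simp add: Tnat_def)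
    moreover have "Tnat r = (3 * r + 1) div 2" using False by (simp add: Tnat_def)
    ultimately show ?thesis by (simp only: r_def[symmetric]) simp
  qed
qed

lemma T2_digit: "i < N \<Longrightarrow> T2 z i = dig (Tnat (trunc2 (Suc N) z)) i"
proof -
  assume "i < N"
  have "T2 z i = dig (Tnat (trunc2 (i+2) z)) i" by (simp add: T2_def dig_def)
  also have "\<dots> = dig (Tnat (trunc2 (i+2) z) mod 2^(Suc i)) i" by (rule dig_mod)
  also have "Tnat (trunc2 (i+2) z) mod 2^(Suc i) = Tnat (trunc2 (i+2) z mod 2^(Suc (Suc i))) mod 2^(Suc i)"
    by (rule Tnat_mod)
  also have "trunc2 (i+2) z mod 2^(Suc (Suc i)) = trunc2 (Suc N) z mod 2^(Suc (Suc i))"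
    using trunc2_trunc2[of "Suc (Suc i)" "i+2" z] trunc2_trunc2[of "Suc (Suc i)" "Suc N" z] \<open>i<N\<close> by simp
  also have "Tnat (trunc2 (Suc N) z mod 2^(Suc (Suc i))) mod 2^(Suc i) = Tnat (trunc2 (Suc N) z) mod 2^(Suc i)"
    by (rule Tnat_mod[symmetric])
  also have "dig (Tnat (trunc2 (Suc N) z) mod 2^(Suc i)) i = dig (Tnat (trunc2 (Suc N) z)) i"
    by (rule dig_mod[symmetric])
  finally show ?thesis .
qed

lemma trunc2_T2: "trunc2 N (T2 z) = Tnat (trunc2 (Suc N) z) mod 2^N"
proof -
  have "agree N (T2 z) (dig (Tnat (trunc2 (Suc N) z)))" by (simp add: agree_def T2_digit)
  then show ?thesis by (simp add: agree_trunc2 trunc2_dig)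
qed

lemma mod_2mult: "(2 * a) mod (2 * m) = 2 * (a mod m)" for a m :: nat
  by (rule mod_mult_mult1)

lemma T_inj_aux:
  fixes u v N :: nat
  assumes "u mod 2 = v mod 2" "Tnat u mod 2^N = Tnat v mod 2^N"
  shows "u mod 2^(Suc N) = v mod 2^(Suc N)"
proof (cases "even u")
  case True
  then have ev: "even v" using assms(1) by (simp add: even_iff_mod_2_eq_zero)
  have "(u div 2) mod 2^N = (v div 2) mod 2^N" using assms(2) True ev by (simp add: Tnat_def)
  then have "(2 * (u div 2)) mod (2 * 2^N) = (2 * (v div 2)) mod (2 * 2^N)" by (simp only: mod_2mult)
  then show ?thesis using True ev by simp
next
  case False
  then have od: "odd v" using assms(1) by (simp add: odd_iff_mod_2_eq_one)
  have "((3*u+1) div 2) mod 2^N = ((3*v+1) div 2) mod 2^N" using assms(2) False od by (simp add: Tnat_def)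
  then have f1: "(2 * ((3*u+1) div 2)) mod (2 * 2^N) = (2 * ((3*v+1) div 2)) mod (2 * 2^N)" by (simp only: mod_2mult)
  have e1: "2 * ((3*u+1) div 2) = 3*u+1" using False by simp
  have e2: "2 * ((3*v+1) div 2) = 3*v+1" using od by simp
  have h: "(3*u+1) mod (2 * 2^N) = (3*v+1) mod (2 * 2^N)" using f1[unfolded e1 e2] .
  define M :: int where "M = 2 * 2^N"
  have "int ((3*u+1) mod (2 * 2^N)) = int ((3*v+1) mod (2 * 2^N))" using h by simp
  then have "(3 * int u + 1) mod M = (3 * int v + 1) mod M" by (simp add: M_def zmod_int add.commute)
  then have "M dvd (3 * int u + 1) - (3 * int v + 1)" by (simp add: mod_eq_dvd_iff)
  then have "M dvd 3 * (int u - int v)" by (simp add: algebra_simps)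
  moreover have "coprime M 3"
  proof -
    have "coprime (2::int) 3" by (simp add: coprime_left_2_iff_odd)
    then have "coprime ((2::int)^Suc N) 3" by (simp only: coprime_power_left_iff) simp
    then show ?thesis by (simp add: M_def)
  qed
  ultimately have "M dvd int u - int v" using coprime_dvd_mult_right_iff by blast
  then have "int u mod M = int v mod M" by (simp add: mod_eq_dvd_iff)
  then have "int (u mod (2 * 2^N)) = int (v mod (2 * 2^N))" by (simp add: M_def zmod_int)
  then show ?thesis by simp
qed

lemma agree_T2: "agree (Suc N) z w \<longleftrightarrow> z 0 = w 0 \<and> agree N (T2 z) (T2 w)"
proof -
  have z0: "trunc2 (Suc N) z mod 2 = trunc2 1 z" using trunc2_trunc2[of 1 "Suc N" z] by simp
  have w0: "trunc2 (Suc N) w mod 2 = trunc2 1 w" using trunc2_trunc2[of 1 "Suc N" w] by simp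
  have e1: "z 0 = w 0 \<longleftrightarrow> trunc2 1 z = trunc2 1 w" by (simp add: agree_trunc2[symmetric] agree_def)
  have m: "trunc2 (Suc N) z mod 2^Suc N = trunc2 (Suc N) z" "trunc2 (Suc N) w mod 2^Suc N = trunc2 (Suc N) w"
    by (intro mod_less trunc2_less)+
  show ?thesis
  proof
    assume "agree (Suc N) z w"
    then have h: "trunc2 (Suc N) z = trunc2 (Suc N) w" by (simp add: agree_trunc2)
    then show "z 0 = w 0 \<and> agree N (T2 z) (T2 w)" using e1 z0 w0 by (simp add: agree_trunc2 trunc2_T2)
  next
    assume h: "z 0 = w 0 \<and> agree N (T2 z) (T2 w)"
    then have "trunc2 (Suc N) z mod 2^Suc N = trunc2 (Suc N) w mod 2^Suc N"
      using e1 z0 w0 by (intro T_inj_aux) (auto simp: agree_trunc2 trunc2_T2)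
    then show "agree (Suc N) z w" using m by (simp add: agree_trunc2)
  qed
qed

lemma arrow_char: "arrow (2^m) a b \<longleftrightarrow> (\<exists>z. trunc2 m z = a \<and> trunc2 m (T2 z) = b)"
proof
  assume "arrow (2^m) a b"
  then obtain x where x: "x mod 2^m = a" "Tnat x mod 2^m = b"
    unfolding arrow_def black_arrow_def red_arrow_def Tnat_def by auto
  have "trunc2 m (dig x) = a" using x by (simp add: trunc2_dig)
  moreover have "trunc2 m (T2 (dig x)) = b"
    using x Tnat_mod[of x m] by (simp add: trunc2_T2 trunc2_dig)
  ultimately show "\<exists>z. trunc2 m z = a \<and> trunc2 m (T2 z) = b" by blast
next
  assume "\<exists>z. trunc2 m z = a \<and> trunc2 m (T2 z) = b"
  then obtain z where z: "trunc2 m z = a" "trunc2 m (T2 z) = b" by blast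
  define c where "c = trunc2 (Suc m) z"
  define x where "x = c + 2 * 2^m"
  have xa: "x mod 2^m = a" using z trunc2_trunc2[of m "Suc m" z] by (simp add: x_def c_def)
  have "x mod 2^Suc m = c mod 2^Suc m" by (simp add: x_def)
  then have xb: "Tnat x mod 2^m = b" using z Tnat_mod[of x m] Tnat_mod[of c m] by (simp add: trunc2_T2 c_def)
  have xpos: "0 < x" by (simp add: x_def)
  have "(1::nat) \<le> 2^m" by simp
  then have "x \<ge> 2" unfolding x_def by linarith
  show "arrow (2^m) a b"
  proof (cases "even x")
    case True
    then show ?thesis unfolding arrow_def black_arrow_def
      using xa xb xpos \<open>x \<ge> 2\<close> by (intro disjI1 exI[of _ x] exI[of _ "x div 2"]) (auto simp: Tnat_def)
  next
    case False
    then show ?thesis unfolding arrow_def red_arrow_def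
      using xa xb xpos by (intro disjI2 exI[of _ x] exI[of _ "(3*x+1) div 2"]) (auto simp: Tnat_def)
  qed
qed

lemma PhiInv_0: "PhiInv z 0 = z 0" by (simp add: PhiInv_def)

lemma PhiInv_T2: "PhiInv (T2 z) = (\<lambda>i. PhiInv z (Suc i))"
  by (simp add: PhiInv_def funpow_swap1)

lemma agree_PhiInv: "agree N (PhiInv z) (PhiInv w) \<longleftrightarrow> agree N z w"
proof (induction N arbitrary: z w)
  case 0 then show ?case by (simp add: agree_def)
next
  case (Suc N)
  have "agree (Suc N) (PhiInv z) (PhiInv w) \<longleftrightarrow> z 0 = w 0 \<and> agree N (PhiInv (T2 z)) (PhiInv (T2 w))"
    by (simp add: agree_Suc0 PhiInv_0 PhiInv_T2)
  also have "\<dots> \<longleftrightarrow> agree (Suc N) z w" using Suc.IH by (simp add: agree_T2)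
  finally show ?case .
qed

lemma agree_all: "(\<forall>N. agree N z w) \<Longrightarrow> z = w"
  by (rule ext) (auto simp: agree_def)

lemma inj_PhiInv: "inj PhiInv"
proof (rule injI)
  fix z w assume "PhiInv z = PhiInv w"
  then have "\<forall>N. agree N z w" using agree_PhiInv by (metis agree_def)
  then show "z = w" by (rule agree_all)
qed

lemma flip_agree: "agree N z (z(N := \<not> z N))" by (simp add: agree_def)

lemma PhiInv_approx: "\<exists>z. agree N (PhiInv z) p"
proof (induction N)
  case 0 then show ?case by (simp add: agree_def)
next
  case (Suc N)
  then obtain z where z: "agree N (PhiInv z) p" by blast
  show ?case
  proof (cases "PhiInv z N = p N")
    case True then show ?thesis using z by (auto simp: agree_Suc)
  next
    case False
    define z' where "z' = z(N := \<not> z N)"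
    have a: "agree N (PhiInv z) (PhiInv z')" using flip_agree[of N z] by (simp add: agree_PhiInv z'_def)
    have "\<not> agree (Suc N) z z'" by (simp add: agree_Suc z'_def)
    then have "\<not> agree (Suc N) (PhiInv z) (PhiInv z')" by (simp add: agree_PhiInv)
    then have "PhiInv z N \<noteq> PhiInv z' N" using a by (simp add: agree_Suc)
    then have "PhiInv z' N = p N" using False by blast
    moreover have "agree N (PhiInv z') p" using a z by (auto simp: agree_def)
    ultimately show ?thesis by (auto simp: agree_Suc)
  qed
qed

lemma surj_PhiInv: "surj PhiInv"
proof -
  have "\<exists>z. PhiInv z = p" for p
  proof -
    define zs where "zs N = (SOME z. agree N (PhiInv z) p)" for N
    have zs: "agree N (PhiInv (zs N)) p" for N
      unfolding zs_def by (rule someI_ex[OF PhiInv_approx])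
    have comp: "agree N (zs N) (zs N')" if "N \<le> N'" for N N'
    proof -
      have "agree N (PhiInv (zs N')) p" using zs[of N'] agree_mono that by blast
      then have "agree N (PhiInv (zs N)) (PhiInv (zs N'))" using zs[of N] by (auto simp: agree_def)
      then show ?thesis by (simp add: agree_PhiInv)
    qed
    define z where "z i = zs (Suc i) i" for i
    have "agree N z (zs N)" for N
      unfolding agree_def z_def
    proof (intro allI impI)
      fix i assume "i < N"
      then show "zs (Suc i) i = zs N i" using comp[of "Suc i" N] by (auto simp: agree_def)
    qed
    then have "agree N (PhiInv z) p" for N
      using zs[of N] agree_PhiInv[of N z "zs N"] by (auto simp: agree_def)
    then show ?thesis by (intro exI[of _ z] agree_all) auto
  qed
  then show ?thesis by (metis surjI)
qed

lemma PhiInv_Phi: "PhiInv (Phi q) = q"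
  unfolding Phi_def by (rule surj_f_inv_f[OF surj_PhiInv])

lemma Phi_PhiInv: "Phi (PhiInv z) = z"
  unfolding Phi_def by (rule inv_f_f[OF inj_PhiInv])

lemma agree_Phi: "agree N (Phi q) (Phi q') \<longleftrightarrow> agree N q q'"
  by (metis agree_PhiInv PhiInv_Phi)

lemma PhiInv_HM: "PhiInv (HM k z) = Mk k (PhiInv z)"
  by (simp add: HM_def PhiInv_Phi)

lemma Mk_set: "{j. i \<le> j \<and> j < i + k \<and> a j} = {j \<in> {i..<i+k}. a j}" by auto

lemma Mk_shift: "Mk k (\<lambda>i. p (Suc i)) = (\<lambda>i. Mk k p (Suc i))"
proof (rule ext)
  fix i
  have "{j. Suc i \<le> j \<and> j < Suc i + k \<and> p j} = Suc ` {j. i \<le> j \<and> j < i + k \<and> p (Suc j)}"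
    by (auto simp: image_iff) (metis Suc_le_D Suc_le_mono Suc_less_eq add_Suc)
  then show "Mk k (\<lambda>i. p (Suc i)) i = Mk k p (Suc i)"
    by (simp add: Mk_def card_image)
qed

lemma HM_T2: "HM k (T2 z) = T2 (HM k z)"
proof -
  have "PhiInv (HM k (T2 z)) = PhiInv (T2 (HM k z))"
    by (simp add: PhiInv_HM PhiInv_T2 Mk_shift)
  then show ?thesis using inj_PhiInv by (simp add: inj_eq)
qed

lemma Mk_agree:
  assumes "agree (n + k - 1) p p'" "1 \<le> k"
  shows "agree n (Mk k p) (Mk k p')"
  unfolding agree_def Mk_def
proof (intro allI impI)
  fix i assume "i < n"
  have "{j. i \<le> j \<and> j < i + k \<and> p j} = {j. i \<le> j \<and> j < i + k \<and> p' j}"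
    using assms \<open>i<n\<close> by (auto simp: agree_def)
  then show "odd (card {j. i \<le> j \<and> j < i + k \<and> p j}) = odd (card {j. i \<le> j \<and> j < i + k \<and> p' j})"
    by simp
qed

lemma parity_flip_aux:
  assumes "finite A" "t \<in> A" "\<forall>j\<in>A. j \<noteq> t \<longrightarrow> q j = q' j" "q t" "\<not> q' t"
  shows "odd (card {j\<in>A. q j}) \<noteq> odd (card {j\<in>A. q' j})"
proof -
  have "{j\<in>A. q j} = insert t {j\<in>A. q' j}" using assms by auto
  moreover have "t \<notin> {j\<in>A. q' j}" using assms by auto
  moreover have "finite {j\<in>A. q' j}" using assms by auto
  ultimately have "card {j\<in>A. q j} = Suc (card {j\<in>A. q' j})" by simp
  then show ?thesis by simp
qed

lemma parity_flip:
  assumes "finite A" "t \<in> A" "\<forall>j\<in>A. j \<noteq> t \<longrightarrow> q j = q' j" "q t \<noteq> q' t"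
  shows "odd (card {j\<in>A. q j}) \<noteq> odd (card {j\<in>A. q' j})"
proof (cases "q t")
  case True then show ?thesis using assms parity_flip_aux[of A t q q'] by auto
next
  case False then show ?thesis using assms parity_flip_aux[of A t q' q] by auto
qed

lemma Mk_flip:
  assumes "agree (n + k - 1) p p'" "p (n + k - 1) \<noteq> p' (n + k - 1)" "1 \<le> k"
  shows "Mk k p n \<noteq> Mk k p' n"
proof -
  have "odd (card {j\<in>{n..<n+k}. p j}) \<noteq> odd (card {j\<in>{n..<n+k}. p' j})"
  proof (rule parity_flip[where t = "n+k-1"])
    show "finite {n..<n+k}" by simp
    show "n + k - 1 \<in> {n..<n+k}" using assms(3) by simp
    show "p (n + k - 1) \<noteq> p' (n + k - 1)" by (rule assms(2))
    show "\<forall>j\<in>{n..<n+k}. j \<noteq> n + k - 1 \<longrightarrow> p j = p' j"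
    proof (intro ballI impI)
      fix j assume "j \<in> {n..<n+k}" "j \<noteq> n + k - 1"
      then have "j < n + k" "j \<noteq> n + k - 1" by auto
      then have "j < n + k - 1" by linarith
      then show "p j = p' j" using assms(1) by (simp add: agree_def)
    qed
  qed
  then show ?thesis unfolding Mk_def Mk_set .
qed

lemma Mk_flip0:
  assumes "1 \<le> k"
  shows "Mk k (case_nat e p) 0 \<noteq> Mk k (case_nat (\<not> e) p) 0"
proof -
  have "odd (card {j\<in>{0..<0+k}. case_nat e p j}) \<noteq> odd (card {j\<in>{0..<0+k}. case_nat (\<not> e) p j})"
    by (rule parity_flip[where t = 0]) (use assms in \<open>auto split: nat.splits\<close>)
  then show ?thesis unfolding Mk_def Mk_set .
qed

lemma HM_agree:
  assumes k: "1 \<le> k" and m: "m = n + k - 1" and a: "agree m z w"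
  shows "agree n (HM k z) (HM k w)"
proof -
  have "agree m (PhiInv z) (PhiInv w)" using a by (simp add: agree_PhiInv)
  then have "agree (n + k - 1) (PhiInv z) (PhiInv w)" unfolding m .
  then have "agree n (Mk k (PhiInv z)) (Mk k (PhiInv w))" using k by (rule Mk_agree)
  then show ?thesis by (simp add: HM_def agree_Phi)
qed

lemma HMbar_trunc:
  assumes k: "1 \<le> k" and m: "m = n + k - 1"
  shows "HMbar k n (trunc2 m z) = trunc2 n (HM k z)"
proof -
  have "agree m (lift2 m (trunc2 m z)) z"
    using dig_trunc2[of m z] by (simp add: agree_def lift2_def dig_def)
  then have "agree n (HM k (lift2 m (trunc2 m z))) (HM k z)"
    by (rule HM_agree[OF k m])
  then have "trunc2 n (HM k (lift2 m (trunc2 m z))) = trunc2 n (HM k z)" by (simp add: agree_trunc2)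
  then show ?thesis unfolding HMbar_def m[symmetric] .
qed

lemma HM_flip:
  assumes k: "1 \<le> k" and m: "m = n + k - 1" and a0: "agree m z w" and d: "z m \<noteq> w m"
  shows "HM k z n \<noteq> HM k w n"
proof -
  have a: "agree m (PhiInv z) (PhiInv w)" using a0 by (simp add: agree_PhiInv)
  have "\<not> agree (Suc m) z w" using d by (simp add: agree_Suc)
  then have "\<not> agree (Suc m) (PhiInv z) (PhiInv w)" by (simp add: agree_PhiInv)
  then have "PhiInv z m \<noteq> PhiInv w m" using a by (simp add: agree_Suc)
  then have d': "PhiInv z (n + k - 1) \<noteq> PhiInv w (n + k - 1)" unfolding m .
  have a': "agree (n + k - 1) (PhiInv z) (PhiInv w)" using a unfolding m .
  have "Mk k (PhiInv z) n \<noteq> Mk k (PhiInv w) n" by (rule Mk_flip[OF a' d' k])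
  then have "\<not> agree (Suc n) (Mk k (PhiInv z)) (Mk k (PhiInv w))" by (simp add: agree_Suc)
  then have n1: "\<not> agree (Suc n) (HM k z) (HM k w)" by (simp add: HM_def agree_Phi)
  have "agree n (HM k z) (HM k w)" by (rule HM_agree[OF k m a0])
  then show ?thesis using n1 by (simp add: agree_Suc)
qed

lemma HM_0: "HM k z 0 = Mk k (PhiInv z) 0"
  using PhiInv_0[of "HM k z"] by (simp add: PhiInv_HM)

lemma trunc2_dig_less: "a < 2^m \<Longrightarrow> trunc2 m (dig a) = a"
  by (simp add: trunc2_dig)

lemma arrow_down:
  assumes k: "1 \<le> k" and m: "m = n + k - 1" and ar: "arrow (2^m) a b"
  shows "arrow (2^n) (HMbar k n a) (HMbar k n b)"
proof -
  obtain z where z: "trunc2 m z = a" "trunc2 m (T2 z) = b"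
    using ar unfolding arrow_char by blast
  have 1: "HMbar k n a = trunc2 n (HM k z)" using HMbar_trunc[OF k m, of z] unfolding z .
  have 2: "HMbar k n b = trunc2 n (T2 (HM k z))"
    using HMbar_trunc[OF k m, of "T2 z"] unfolding z HM_T2 .
  show ?thesis unfolding arrow_char 1 2 by blast
qed

lemma out_part:
  assumes n1: "1 \<le> n" and k1: "1 \<le> k" and m: "m = n + k - 1"
    and arr: "arrow (2^n) (HMbar k n x) (HMbar k n y)"
    and a: "a < 2^m" "HMbar k n a = HMbar k n x"
  shows "\<exists>!b. (b < 2^m \<and> HMbar k n b = HMbar k n y) \<and> arrow (2^m) a b"
proof -
  define z where "z = dig a"
  define z1 where "z1 = z(m := \<not> z m)"
  have za: "trunc2 m z = a" using a by (simp add: z_def trunc2_dig_less)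
  have zz1: "agree m z z1" unfolding z1_def by (rule flip_agree)
  have z1a: "trunc2 m z1 = a" using za zz1 by (simp add: agree_trunc2)
  define B where "B w = trunc2 m (T2 w)" for w
  have hB: "HMbar k n (B w) = trunc2 n (T2 (HM k w))" for w
    using HMbar_trunc[OF k1 m, of "T2 w"] unfolding B_def HM_T2 .
  have fl: "HM k z n \<noteq> HM k z1 n"
    by (rule HM_flip[OF k1 m zz1]) (simp add: z1_def)
  have ag: "agree n (HM k z) (HM k z1)" by (rule HM_agree[OF k1 m zz1])
  have d0: "HM k z 0 = HM k z1 0" using ag n1 by (simp add: agree_def)
  have dist: "HMbar k n (B z) \<noteq> HMbar k n (B z1)"
  proof
    assume "HMbar k n (B z) = HMbar k n (B z1)"
    then have "agree n (T2 (HM k z)) (T2 (HM k z1))" by (simp add: hB agree_trunc2)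
    then have "agree (Suc n) (HM k z) (HM k z1)" using d0 by (simp add: agree_T2)
    then show False using fl by (simp add: agree_Suc)
  qed
  have hx: "HMbar k n x = trunc2 n (HM k z)" using HMbar_trunc[OF k1 m, of z] za a by simp
  have hx1: "HMbar k n x = trunc2 n (HM k z1)" using HMbar_trunc[OF k1 m, of z1] z1a a by simp
  obtain w where w: "trunc2 n w = HMbar k n x" "trunc2 n (T2 w) = HMbar k n y"
    using arr unfolding arrow_char by blast
  have arrB: "arrow (2^m) a (B u)" if "trunc2 m u = a" for u
    unfolding arrow_char B_def using that by blast
  have Bless: "B u < 2^m" for u by (simp add: B_def trunc2_less)
  have cover: "b = B z \<or> b = B z1" if ab: "arrow (2^m) a b" for b
  proof -
    obtain z' where z': "trunc2 m z' = a" "trunc2 m (T2 z') = b" using ab unfolding arrow_char by blast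
    have az: "agree m z' z" using z' za by (simp add: agree_trunc2)
    show ?thesis
    proof (cases "z' m = z m")
      case True
      then have "agree (Suc m) z' z" using az by (simp add: agree_Suc)
      then have "agree m (T2 z') (T2 z)" by (simp add: agree_T2)
      then show ?thesis using z' by (simp add: agree_trunc2 B_def)
    next
      case False
      then have "z' m = z1 m" by (simp add: z1_def)
      moreover have "agree m z' z1" using az zz1 by (simp add: agree_def)
      ultimately have "agree (Suc m) z' z1" by (simp add: agree_Suc)
      then have "agree m (T2 z') (T2 z1)" by (simp add: agree_T2)
      then show ?thesis using z' by (simp add: agree_trunc2 B_def)
    qed
  qed
  have hit: "HMbar k n (B z) = HMbar k n y \<or> HMbar k n (B z1) = HMbar k n y"
  proof (cases "w n = HM k z n")
    case True
    have "agree n w (HM k z)" using w hx by (simp add: agree_trunc2)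
    then have "agree (Suc n) w (HM k z)" using True by (simp add: agree_Suc)
    then have "agree n (T2 w) (T2 (HM k z))" by (simp add: agree_T2)
    then show ?thesis using w hB by (simp add: agree_trunc2)
  next
    case False
    then have "w n = HM k z1 n" using fl by blast
    moreover have "agree n w (HM k z1)" using w hx1 by (simp add: agree_trunc2)
    ultimately have "agree (Suc n) w (HM k z1)" by (simp add: agree_Suc)
    then have "agree n (T2 w) (T2 (HM k z1))" by (simp add: agree_T2)
    then show ?thesis using w hB by (simp add: agree_trunc2)
  qed
  show ?thesis
  proof (cases "HMbar k n (B z) = HMbar k n y")
    case True
    show ?thesis
    proof (rule ex1I[of _ "B z"])
      show "(B z < 2^m \<and> HMbar k n (B z) = HMbar k n y) \<and> arrow (2^m) a (B z)"
        using True Bless arrB za by blast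
      fix b assume "(b < 2^m \<and> HMbar k n b = HMbar k n y) \<and> arrow (2^m) a b"
      then show "b = B z" using cover[of b] True dist by auto
    qed
  next
    case False
    then have T: "HMbar k n (B z1) = HMbar k n y" using hit by blast
    show ?thesis
    proof (rule ex1I[of _ "B z1"])
      show "(B z1 < 2^m \<and> HMbar k n (B z1) = HMbar k n y) \<and> arrow (2^m) a (B z1)"
        using T Bless arrB z1a by blast
      fix b assume "(b < 2^m \<and> HMbar k n b = HMbar k n y) \<and> arrow (2^m) a b"
      then show "b = B z1" using cover[of b] False by auto
    qed
  qed
qed

lemma in_part:
  assumes n1: "1 \<le> n" and k1: "1 \<le> k" and m: "m = n + k - 1"
    and arr: "arrow (2^n) (HMbar k n x) (HMbar k n y)"
    and b: "b < 2^m" "HMbar k n b = HMbar k n y"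
  shows "\<exists>!a. (a < 2^m \<and> HMbar k n a = HMbar k n x) \<and> arrow (2^m) a b"
proof -
  define zb where "zb = dig b"
  have zbb: "trunc2 m zb = b" using b by (simp add: zb_def trunc2_dig_less)
  define Z where "Z e = Phi (case_nat e (PhiInv zb))" for e
  have PZ: "PhiInv (Z e) = case_nat e (PhiInv zb)" for e by (simp add: Z_def PhiInv_Phi)
  have Z0: "Z e 0 = e" for e using PhiInv_0[of "Z e"] PZ[of e] by simp
  have TZ: "T2 (Z e) = zb" for e
  proof -
    have "PhiInv (T2 (Z e)) = PhiInv zb" by (simp add: PhiInv_T2 PZ)
    then show ?thesis using inj_PhiInv by (simp add: inj_eq)
  qed
  define A where "A e = trunc2 m (Z e)" for e
  have arrA: "arrow (2^m) (A e) b" for e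
    unfolding arrow_char A_def by (intro exI[of _ "Z e"]) (simp add: TZ zbb)
  have Aless: "A e < 2^m" for e by (simp add: A_def trunc2_less)
  have hA: "HMbar k n (A e) = trunc2 n (HM k (Z e))" for e
    unfolding A_def by (rule HMbar_trunc[OF k1 m])
  have H0: "HM k (Z True) 0 \<noteq> HM k (Z False) 0"
    using Mk_flip0[OF k1, of True "PhiInv zb"] by (simp add: HM_0 PZ)
  have dist: "HMbar k n (A True) \<noteq> HMbar k n (A False)"
  proof
    assume "HMbar k n (A True) = HMbar k n (A False)"
    then have "agree n (HM k (Z True)) (HM k (Z False))" by (simp add: hA agree_trunc2)
    then show False using H0 n1 by (simp add: agree_def)
  qed
  obtain w where w: "trunc2 n w = HMbar k n x" "trunc2 n (T2 w) = HMbar k n y"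
    using arr unfolding arrow_char by blast
  have hy: "HMbar k n y = trunc2 n (T2 (HM k (Z e)))" for e
  proof -
    have "HMbar k n y = trunc2 n (HM k zb)" using b HMbar_trunc[OF k1 m, of zb] zbb by simp
    also have "\<dots> = trunc2 n (T2 (HM k (Z e)))" using TZ[of e] HM_T2[of k "Z e"] by simp
    finally show ?thesis .
  qed
  obtain e where e: "HM k (Z e) 0 = w 0"
    using H0 by (cases "HM k (Z True) 0 = w 0") auto
  have "agree n (T2 w) (T2 (HM k (Z e)))"
    using w hy[of e] by (simp add: agree_trunc2)
  then have "agree (Suc n) w (HM k (Z e))"
    using e by (simp add: agree_T2)
  then have "agree n w (HM k (Z e))" by (simp add: agree_Suc)
  then have hit: "HMbar k n (A e) = HMbar k n x" using w hA[of e] by (simp add: agree_trunc2)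
  have cover: "a = A (z' 0)" if "trunc2 m z' = a" "trunc2 m (T2 z') = b" for a z'
  proof -
    have "agree m (T2 z') (T2 (Z (z' 0)))" using that TZ zbb by (simp add: agree_trunc2)
    moreover have "z' 0 = Z (z' 0) 0" by (simp add: Z0)
    ultimately have "agree (Suc m) z' (Z (z' 0))" by (simp add: agree_T2)
    then have "agree m z' (Z (z' 0))" by (simp add: agree_Suc)
    then show ?thesis using that by (simp add: agree_trunc2 A_def)
  qed
  have cover2: "a = A True \<or> a = A False" if ab: "arrow (2^m) a b" for a
  proof -
    obtain z' where "trunc2 m z' = a" "trunc2 m (T2 z') = b" using ab unfolding arrow_char by blast
    then have "a = A (z' 0)" by (rule cover)
    then show ?thesis by (cases "z' 0") auto
  qed
  show ?thesis
  proof (rule ex1I[of _ "A e"])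
    show "(A e < 2^m \<and> HMbar k n (A e) = HMbar k n x) \<and> arrow (2^m) (A e) b"
      using Aless hit arrA by blast
    fix a assume h: "(a < 2^m \<and> HMbar k n a = HMbar k n x) \<and> arrow (2^m) a b"
    then have "a = A True \<or> a = A False" using cover2 by blast
    then show "a = A e" using h hit dist by (cases e) auto
  qed
qed

theorem mainTheorem19:
  fixes n k x y :: nat
  assumes "1 \<le> n" and "1 \<le> k"
    and "x < 2^(n + k - 1)" and "y < 2^(n + k - 1)"
  shows "(arrow (2^n) (HMbar k n x) (HMbar k n y) \<longleftrightarrow>
          (\<exists>a\<in>HMclass k n x. \<exists>b\<in>HMclass k n y. arrow (2^(n + k - 1)) a b))
       \<and> (arrow (2^n) (HMbar k n x) (HMbar k n y) \<longrightarrow>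
          (\<forall>a\<in>HMclass k n x. \<exists>!b. b \<in> HMclass k n y \<and> arrow (2^(n + k - 1)) a b)
        \<and> (\<forall>b\<in>HMclass k n y. \<exists>!a. a \<in> HMclass k n x \<and> arrow (2^(n + k - 1)) a b))"
proof -
  define m where "m = n + k - 1"
  have n1: "1 \<le> n" and k1: "1 \<le> k" and mm: "m = n + k - 1" using assms m_def by auto
  have cls: "c \<in> HMclass k n r \<longleftrightarrow> c < 2^m \<and> HMbar k n c = HMbar k n r" for c r
    by (simp add: HMclass_def m_def)
  have xm: "x < 2^m" using assms by (simp add: m_def)
  have P1: "arrow (2^n) (HMbar k n x) (HMbar k n y) \<longleftrightarrow>
          (\<exists>a\<in>HMclass k n x. \<exists>b\<in>HMclass k n y. arrow (2^m) a b)"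
  proof
    assume arr: "arrow (2^n) (HMbar k n x) (HMbar k n y)"
    obtain b where bb: "(b < 2^m \<and> HMbar k n b = HMbar k n y) \<and> arrow (2^m) x b"
      using out_part[OF n1 k1 mm arr xm refl] by blast
    have "x \<in> HMclass k n x" "b \<in> HMclass k n y" using xm bb by (simp_all add: cls)
    then show "\<exists>a\<in>HMclass k n x. \<exists>b\<in>HMclass k n y. arrow (2^m) a b"
      using bb by blast
  next
    assume "\<exists>a\<in>HMclass k n x. \<exists>b\<in>HMclass k n y. arrow (2^m) a b"
    then obtain a b where ab: "a \<in> HMclass k n x" "b \<in> HMclass k n y" "arrow (2^m) a b" by blast
    have "arrow (2^n) (HMbar k n a) (HMbar k n b)" by (rule arrow_down[OF k1 mm ab(3)])
    then show "arrow (2^n) (HMbar k n x) (HMbar k n y)" using ab by (simp add: cls)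
  qed
  have P2: "arrow (2^n) (HMbar k n x) (HMbar k n y) \<longrightarrow>
          (\<forall>a\<in>HMclass k n x. \<exists>!b. b \<in> HMclass k n y \<and> arrow (2^m) a b)
        \<and> (\<forall>b\<in>HMclass k n y. \<exists>!a. a \<in> HMclass k n x \<and> arrow (2^m) a b)"
  proof (intro impI conjI ballI)
    assume arr: "arrow (2^n) (HMbar k n x) (HMbar k n y)"
    fix a assume "a \<in> HMclass k n x"
    then have a: "a < 2^m" "HMbar k n a = HMbar k n x" by (auto simp: cls)
    show "\<exists>!b. b \<in> HMclass k n y \<and> arrow (2^m) a b"
      unfolding cls by (rule out_part[OF n1 k1 mm arr a])
  next
    assume arr: "arrow (2^n) (HMbar k n x) (HMbar k n y)"
    fix b assume "b \<in> HMclass k n y"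
    then have b: "b < 2^m" "HMbar k n b = HMbar k n y" by (auto simp: cls)
    show "\<exists>!a. a \<in> HMclass k n x \<and> arrow (2^m) a b"
      unfolding cls by (rule in_part[OF n1 k1 mm arr b])
  qed
  show ?thesis using P1 P2 unfolding m_def by blast
qed

end
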